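(* Let $A\subseteq B$ be an $m$-extension (under the standing assumptions below). Then for all $\theta,\zeta\in\mathrm{Con}(A)$: $[\theta,\zeta]_A=\Delta_A$ iff $[Cg_B(\theta),Cg_B(\zeta)]_B=\Delta_B$.
   Context: For an algebra $M$ of a fixed signature: $\mathrm{Con}(M)$ is its congruence lattice with bottom $\Delta_M$ and top $\nabla_M=M^2$; $Cg_M(X)$ is the congruence generated by $X\subseteq M^2$. $[\cdot,\cdot]_M$ is the term condition commutator: for $\alpha,\beta,\mu\in\mathrm{Con}(M)$, $C(\alpha,\beta;\mu)$ means that for all $n,k$, every $(n+k)$-ary term $t$, all $(a_i,b_i)\in\alpha$ and $(c_j,d_j)\in\beta$: $(t(\bar a,\bar c),t(\bar a,\bar d))\in\mu$ iff $(t(\bar b,\bar c),t(\bar b,\bar d))\in\mu$; $[\alpha,\beta]_M=\bigcap\{\mu: C(\alpha,\beta;\mu)\}$. A congruence $\phi\neq\nabla_M$ is prime if $[\alpha,\beta]_M\subseteq\phi$ implies $\alpha\subseteq\phi$ or $\beta\subseteq\phi$; $\mathrm{Spec}(M)$ is the set of primes, $\mathrm{Min}(M)$ its minimal elements; $\rho_M(\theta)$ is the intersection of all primes containing $\theta$ ($\nabla_M$ if none); $M$ is semiprime if $\rho_M(\Delta_M)=\Delta_M$. Standing assumptions: $B$ is an algebra, $A$ is a subalgebra of $B$, $A$ and $B$ are semiprime, and the commutators of $A$ and $B$ are commutative and distributive w.r.t. arbitrary joins (i.e. $[\alpha,\beta]=[\beta,\alpha]$ and $[\bigvee_i\alpha_i,\beta]=\bigvee_i[\alpha_i,\beta]$).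 The extension $A\subseteq B$ is an $m$-extension iff $\mu\cap\nabla_A\in\mathrm{Min}(A)$ for all $\mu\in\mathrm{Min}(B)$. *)

theory Defs
  imports Main
begin

type_synonym ('f,'a) alg = "'a set \<times> ('f \<Rightarrow> 'a list \<Rightarrow> 'a)"

definition carr :: "('f,'a) alg \<Rightarrow> 'a set" where "carr M = fst M"
definition opr :: "('f,'a) alg \<Rightarrow> 'f \<Rightarrow> 'a list \<Rightarrow> 'a" where "opr M = snd M"

definition is_algebra :: "('f \<Rightarrow> nat) \<Rightarrow> ('f,'a) alg \<Rightarrow> bool" where
  "is_algebra ar M \<longleftrightarrow>
     (\<forall>f xs. length xs = ar f \<and> set xs \<subseteq> carr M \<longrightarrow> opr M f xs \<in> carr M)"

definition subalgebra :: "('f \<Rightarrow> nat) \<Rightarrow> ('f,'a) alg \<Rightarrow> ('f,'a) alg \<Rightarrow> bool" where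
  "subalgebra ar A B \<longleftrightarrow> is_algebra ar A \<and> is_algebra ar B \<and> carr A \<subseteq> carr B \<and>
     (\<forall>f xs. length xs = ar f \<and> set xs \<subseteq> carr A \<longrightarrow> opr A f xs = opr B f xs)"

datatype ('f,'v) trm = Var 'v | Op 'f "('f,'v) trm list"

fun wf_trm :: "('f \<Rightarrow> nat) \<Rightarrow> ('f,'v) trm \<Rightarrow> bool" where
  "wf_trm ar (Var v) = True"
| "wf_trm ar (Op f ts) = (length ts = ar f \<and> (\<forall>t\<in>set ts. wf_trm ar t))"

fun eval :: "('f \<Rightarrow> 'a list \<Rightarrow> 'a) \<Rightarrow> ('v \<Rightarrow> 'a) \<Rightarrow> ('f,'v) trm \<Rightarrow> 'a" where
  "eval I env (Var v) = env v"
| "eval I env (Op f ts) = I f (map (eval I env) ts)"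

definition Con :: "('f \<Rightarrow> nat) \<Rightarrow> ('f,'a) alg \<Rightarrow> 'a rel set" where
  "Con ar M = {\<theta>. equiv (carr M) \<theta> \<and>
     (\<forall>f xs ys. length xs = ar f \<and> length ys = ar f \<and> list_all2 (\<lambda>x y. (x,y) \<in> \<theta>) xs ys
        \<longrightarrow> (opr M f xs, opr M f ys) \<in> \<theta>)}"

definition Delta :: "('f,'a) alg \<Rightarrow> 'a rel" where "Delta M = Id_on (carr M)"
definition Nabla :: "('f,'a) alg \<Rightarrow> 'a rel" where "Nabla M = carr M \<times> carr M"

definition Cg :: "('f \<Rightarrow> nat) \<Rightarrow> ('f,'a) alg \<Rightarrow> 'a rel \<Rightarrow> 'a rel" where
  "Cg ar M X = \<Inter>{\<theta> \<in> Con ar M. X \<subseteq> \<theta>}"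

text \<open>Variables of a term are split into the
a-block (Inl i) and the c-block (Inr j); since terms have finitely many variables
and congruences are reflexive on the carrier, quantifying over full assignments
is the same as quantifying over finite tuples.\<close>

definition TC :: "('f \<Rightarrow> nat) \<Rightarrow> ('f,'a) alg \<Rightarrow> 'a rel \<Rightarrow> 'a rel \<Rightarrow> 'a rel \<Rightarrow> bool" where
  "TC ar M \<alpha> \<beta> \<mu> \<longleftrightarrow>
     (\<forall>(t :: ('f, nat + nat) trm) a b c d. wf_trm ar t \<longrightarrow>
        (\<forall>i. (a i, b i) \<in> \<alpha>) \<longrightarrow> (\<forall>j. (c j, d j) \<in> \<beta>) \<longrightarrow>
        ((eval (opr M) (case_sum a c) t, eval (opr M) (case_sum a d) t) \<in> \<mu>
          \<longleftrightarrow> (eval (opr M) (case_sum b c) t, eval (opr M) (case_sum b d) t) \<in> \<mu>))"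

definition comm :: "('f \<Rightarrow> nat) \<Rightarrow> ('f,'a) alg \<Rightarrow> 'a rel \<Rightarrow> 'a rel \<Rightarrow> 'a rel" where
  "comm ar M \<alpha> \<beta> = \<Inter>{\<mu> \<in> Con ar M. TC ar M \<alpha> \<beta> \<mu>}"

definition prime_con :: "('f \<Rightarrow> nat) \<Rightarrow> ('f,'a) alg \<Rightarrow> 'a rel \<Rightarrow> bool" where
  "prime_con ar M \<phi> \<longleftrightarrow> \<phi> \<in> Con ar M \<and> \<phi> \<noteq> Nabla M \<and>
     (\<forall>\<alpha>\<in>Con ar M. \<forall>\<beta>\<in>Con ar M. comm ar M \<alpha> \<beta> \<subseteq> \<phi> \<longrightarrow> \<alpha> \<subseteq> \<phi> \<or> \<beta> \<subseteq> \<phi>)"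

definition Spec :: "('f \<Rightarrow> nat) \<Rightarrow> ('f,'a) alg \<Rightarrow> 'a rel set" where
  "Spec ar M = {\<phi>. prime_con ar M \<phi>}"

definition MinSpec :: "('f \<Rightarrow> nat) \<Rightarrow> ('f,'a) alg \<Rightarrow> 'a rel set" where
  "MinSpec ar M = {\<phi> \<in> Spec ar M. \<forall>\<psi>\<in>Spec ar M. \<psi> \<subseteq> \<phi> \<longrightarrow> \<psi> = \<phi>}"

definition rad :: "('f \<Rightarrow> nat) \<Rightarrow> ('f,'a) alg \<Rightarrow> 'a rel \<Rightarrow> 'a rel" where
  "rad ar M \<theta> = (if {\<phi> \<in> Spec ar M. \<theta> \<subseteq> \<phi>} = {} then Nabla M
                  else \<Inter>{\<phi> \<in> Spec ar M. \<theta> \<subseteq> \<phi>})"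

definition semiprime :: "('f \<Rightarrow> nat) \<Rightarrow> ('f,'a) alg \<Rightarrow> bool" where
  "semiprime ar M \<longleftrightarrow> rad ar M (Delta M) = Delta M"

definition comm_commutative :: "('f \<Rightarrow> nat) \<Rightarrow> ('f,'a) alg \<Rightarrow> bool" where
  "comm_commutative ar M \<longleftrightarrow>
     (\<forall>\<alpha>\<in>Con ar M. \<forall>\<beta>\<in>Con ar M. comm ar M \<alpha> \<beta> = comm ar M \<beta> \<alpha>)"

definition comm_join_distributive :: "('f \<Rightarrow> nat) \<Rightarrow> ('f,'a) alg \<Rightarrow> bool" where
  "comm_join_distributive ar M \<longleftrightarrow>
     (\<forall>S \<subseteq> Con ar M. \<forall>\<beta>\<in>Con ar M.
        comm ar M (Cg ar M (\<Union>S)) \<beta> = Cg ar M (\<Union>\<alpha>\<in>S. comm ar M \<alpha> \<beta>))"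

definition m_extension :: "('f \<Rightarrow> nat) \<Rightarrow> ('f,'a) alg \<Rightarrow> ('f,'a) alg \<Rightarrow> bool" where
  "m_extension ar A B \<longleftrightarrow> (\<forall>\<mu>\<in>MinSpec ar B. \<mu> \<inter> Nabla A \<in> MinSpec ar A)"

end

theory Submission
  imports Defs
begin

lemma Con_sub: "\<theta> \<in> Con ar M \<Longrightarrow> \<theta> \<subseteq> carr M \<times> carr M"
  unfolding Con_def equiv_def refl_on_def by blast

lemma Con_refl: "\<theta> \<in> Con ar M \<Longrightarrow> x \<in> carr M \<Longrightarrow> (x,x) \<in> \<theta>"
  unfolding Con_def equiv_def refl_on_def by blast

lemma Con_sym: "\<theta> \<in> Con ar M \<Longrightarrow> (x,y) \<in> \<theta> \<Longrightarrow> (y,x) \<in> \<theta>"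
  unfolding Con_def equiv_def sym_def by blast

lemma Con_trans: "\<theta> \<in> Con ar M \<Longrightarrow> (x,y) \<in> \<theta> \<Longrightarrow> (y,z) \<in> \<theta> \<Longrightarrow> (x,z) \<in> \<theta>"
  unfolding Con_def equiv_def trans_def by blast

lemma Con_op: "\<theta> \<in> Con ar M \<Longrightarrow> length xs = ar f \<Longrightarrow> length ys = ar f \<Longrightarrow>
   list_all2 (\<lambda>x y. (x,y) \<in> \<theta>) xs ys \<Longrightarrow> (opr M f xs, opr M f ys) \<in> \<theta>"
  unfolding Con_def by blast

lemma eval_compat:
  assumes "\<theta> \<in> Con ar M"
  shows "wf_trm ar t \<Longrightarrow> (\<forall>v. (e1 v, e2 v) \<in> \<theta>) \<Longrightarrow>
         (eval (opr M) e1 t, eval (opr M) e2 t) \<in> \<theta>"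
proof (induction t)
  case (Var v)
  then show ?case by simp
next
  case (Op f ts)
  have "list_all2 (\<lambda>x y. (x,y) \<in> \<theta>) (map (eval (opr M) e1) ts) (map (eval (opr M) e2) ts)"
    using Op by (auto simp: list_all2_conv_all_nth)
  then show ?case using Op assms by (auto intro: Con_op)
qed

lemma TC_right:
  assumes "\<alpha> \<in> Con ar M" "\<beta> \<in> Con ar M"
  shows "TC ar M \<alpha> \<beta> \<beta>"
  unfolding TC_def
proof (intro allI impI)
  fix t :: "(_, nat+nat) trm" and a b c d :: "nat \<Rightarrow> _"
  assume t: "wf_trm ar t" and ab: "\<forall>i. (a i, b i) \<in> \<alpha>" and cd: "\<forall>j. (c j, d j) \<in> \<beta>"
  have "\<forall>v. (case_sum x c v, case_sum x d v) \<in> \<beta>" if "\<forall>i. x i \<in> carr M" for x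
    using that cd assms(2) by (auto split: sum.splits intro: Con_refl)
  moreover have "\<forall>i. a i \<in> carr M" "\<forall>i. b i \<in> carr M" using ab Con_sub[OF assms(1)] by blast+
  ultimately show "((eval (opr M) (case_sum a c) t, eval (opr M) (case_sum a d) t) \<in> \<beta>) =
           ((eval (opr M) (case_sum b c) t, eval (opr M) (case_sum b d) t) \<in> \<beta>)"
    using eval_compat[OF assms(2) t] by blast
qed

lemma TC_left:
  assumes "\<alpha> \<in> Con ar M" "\<beta> \<in> Con ar M"
  shows "TC ar M \<alpha> \<beta> \<alpha>"
  unfolding TC_def
proof (intro allI impI)
  fix t :: "(_, nat+nat) trm" and a b c d :: "nat \<Rightarrow> _"
  assume t: "wf_trm ar t" and ab: "\<forall>i. (a i, b i) \<in> \<alpha>" and cd: "\<forall>j. (c j, d j) \<in> \<beta>"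
  have "\<forall>v. (case_sum a x v, case_sum b x v) \<in> \<alpha>" if "\<forall>i. x i \<in> carr M" for x
    using that ab assms(1) by (auto split: sum.splits intro: Con_refl)
  moreover have "\<forall>i. c i \<in> carr M" "\<forall>i. d i \<in> carr M" using cd Con_sub[OF assms(2)] by blast+
  ultimately have 1: "(eval (opr M) (case_sum a c) t, eval (opr M) (case_sum b c) t) \<in> \<alpha>"
     and 2: "(eval (opr M) (case_sum a d) t, eval (opr M) (case_sum b d) t) \<in> \<alpha>"
    using eval_compat[OF assms(1) t] by blast+
  show "((eval (opr M) (case_sum a c) t, eval (opr M) (case_sum a d) t) \<in> \<alpha>) =
           ((eval (opr M) (case_sum b c) t, eval (opr M) (case_sum b d) t) \<in> \<alpha>)"
    using 1 2 Con_sym[OF assms(1)] Con_trans[OF assms(1)] by meson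
qed

lemma comm_sub: "\<alpha> \<in> Con ar M \<Longrightarrow> \<beta> \<in> Con ar M \<Longrightarrow> comm ar M \<alpha> \<beta> \<subseteq> \<alpha> \<inter> \<beta>"
  unfolding comm_def using TC_left TC_right by blast

lemma Delta_comm: "Delta M \<subseteq> comm ar M \<alpha> \<beta>"
  unfolding comm_def Delta_def using Con_refl by fastforce

lemma Inter_Con: "S \<subseteq> Con ar M \<Longrightarrow> S \<noteq> {} \<Longrightarrow> \<Inter>S \<in> Con ar M"
proof -
  assume S: "S \<subseteq> Con ar M" "S \<noteq> {}"
  obtain \<theta>0 where t0: "\<theta>0 \<in> S" using S by blast
  have "\<Inter>S \<subseteq> carr M \<times> carr M" using t0 S Con_sub by blast
  moreover have "\<forall>x\<in>carr M. (x,x) \<in> \<Inter>S"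
  proof (intro ballI InterI)
    fix x \<theta> assume "x \<in> carr M" "\<theta> \<in> S" then show "(x,x) \<in> \<theta>" using S Con_refl[of \<theta> ar M x] by blast
  qed
  moreover have "sym (\<Inter>S)"
  proof (rule symI, rule InterI)
    fix x y \<theta> assume "(x,y) \<in> \<Inter>S" "\<theta> \<in> S" then show "(y,x) \<in> \<theta>" using S Con_sym[of \<theta> ar M x y] by blast
  qed
  moreover have "trans (\<Inter>S)"
  proof (rule transI, rule InterI)
    fix x y z \<theta> assume "(x,y) \<in> \<Inter>S" "(y,z) \<in> \<Inter>S" "\<theta> \<in> S"
    then show "(x,z) \<in> \<theta>" using S Con_trans[of \<theta> ar M x y z] by blast
  qed
  ultimately have "equiv (carr M) (\<Inter>S)"
    unfolding equiv_def refl_on_def by blast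
  moreover have "(opr M f xs, opr M f ys) \<in> \<Inter>S" if "length xs = ar f" "length ys = ar f"
     "list_all2 (\<lambda>x y. (x,y) \<in> \<Inter>S) xs ys" for f xs ys
  proof -
    have "(opr M f xs, opr M f ys) \<in> \<theta>" if "\<theta> \<in> S" for \<theta>
      using S that \<open>length xs = ar f\<close> \<open>length ys = ar f\<close>
        list_all2_mono[OF \<open>list_all2 _ xs ys\<close>, of "\<lambda>x y. (x,y) \<in> \<theta>"]
      by (auto intro: Con_op)
    then show ?thesis by blast
  qed
  ultimately show ?thesis unfolding Con_def by blast
qed

lemma Nabla_Con: "is_algebra ar M \<Longrightarrow> Nabla M \<in> Con ar M"
proof -
  assume alg: "is_algebra ar M"
  have "set xs \<subseteq> carr M \<and> set ys \<subseteq> carr M" if "list_all2 (\<lambda>x y. (x,y) \<in> carr M \<times> carr M) xs ys" for xs ys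
    using that by (induction rule: list_all2_induct) auto
  note L = this
  have "(opr M f xs, opr M f ys) \<in> carr M \<times> carr M" if "length xs = ar f" "length ys = ar f"
     "list_all2 (\<lambda>x y. (x,y) \<in> carr M \<times> carr M) xs ys" for f xs ys
  proof -
    have "set xs \<subseteq> carr M" "set ys \<subseteq> carr M" using L[OF that(3)] by auto
    then show ?thesis using that(1,2) alg unfolding is_algebra_def by simp
  qed
  moreover have "equiv (carr M) (carr M \<times> carr M)"
    unfolding equiv_def refl_on_def sym_def trans_def by blast
  ultimately show ?thesis unfolding Con_def Nabla_def by blast
qed

lemma Cg_Con: "is_algebra ar M \<Longrightarrow> X \<subseteq> Nabla M \<Longrightarrow> Cg ar M X \<in> Con ar M"
  unfolding Cg_def using Nabla_Con[of ar M] by (intro Inter_Con) auto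

lemma Cg_sup: "X \<subseteq> Cg ar M X"
  unfolding Cg_def by blast

lemma Cg_least: "\<theta> \<in> Con ar M \<Longrightarrow> X \<subseteq> \<theta> \<Longrightarrow> Cg ar M X \<subseteq> \<theta>"
  unfolding Cg_def by blast

lemma chain_prime:
  assumes D: "D \<subseteq> Spec ar M" "D \<noteq> {}" and ch: "\<forall>x\<in>D. \<forall>y\<in>D. x \<subseteq> y \<or> y \<subseteq> x"
  shows "\<Inter>D \<in> Spec ar M"
proof -
  have DC: "D \<subseteq> Con ar M" using D unfolding Spec_def prime_con_def by blast
  have C: "\<Inter>D \<in> Con ar M" using Inter_Con[OF DC D(2)] .
  obtain \<psi> where \<psi>: "\<psi> \<in> D" using D by blast
  have "\<psi> \<noteq> Nabla M" "\<psi> \<subseteq> Nabla M" using \<psi> D DC Con_sub unfolding Spec_def prime_con_def Nabla_def by blast+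
  hence N: "\<Inter>D \<noteq> Nabla M" using \<psi> by blast
  have P: "\<alpha> \<subseteq> \<Inter>D \<or> \<beta> \<subseteq> \<Inter>D"
    if ab: "\<alpha> \<in> Con ar M" "\<beta> \<in> Con ar M" "comm ar M \<alpha> \<beta> \<subseteq> \<Inter>D" for \<alpha> \<beta>
  proof (rule ccontr)
    assume "\<not> (\<alpha> \<subseteq> \<Inter>D \<or> \<beta> \<subseteq> \<Inter>D)"
    then obtain \<psi>1 \<psi>2 where p: "\<psi>1 \<in> D" "\<psi>2 \<in> D" "\<not> \<alpha> \<subseteq> \<psi>1" "\<not> \<beta> \<subseteq> \<psi>2" by blast
    have pr: "\<And>\<psi>. \<psi> \<in> D \<Longrightarrow> \<alpha> \<subseteq> \<psi> \<or> \<beta> \<subseteq> \<psi>"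
      using D ab unfolding Spec_def prime_con_def by blast
    show False using ch p pr[OF p(1)] pr[OF p(2)] by blast
  qed
  show ?thesis using C N P unfolding Spec_def prime_con_def by blast
qed

lemma minprime_exists:
  assumes \<phi>: "\<phi> \<in> Spec ar M"
  shows "\<exists>\<mu>\<in>MinSpec ar M. \<mu> \<subseteq> \<phi>"
proof -
  define A where "A = uminus ` {\<psi> \<in> Spec ar M. \<psi> \<subseteq> \<phi>}"
  have "\<forall>C\<in>chains A. \<exists>U\<in>A. \<forall>X\<in>C. X \<subseteq> U"
  proof
    fix C assume C: "C \<in> chains A"
    show "\<exists>U\<in>A. \<forall>X\<in>C. X \<subseteq> U"
    proof (cases "C = {}")
      case True
      then show ?thesis using \<phi> unfolding A_def by blast
    next
      case False
      define D where "D = uminus ` C"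
      have CA: "C \<subseteq> A" using C unfolding chains_def by blast
      have DS: "D \<subseteq> {\<psi> \<in> Spec ar M. \<psi> \<subseteq> \<phi>}" using CA unfolding D_def A_def by auto
      have "D \<noteq> {}" using False unfolding D_def by blast
      moreover have "\<forall>x\<in>D. \<forall>y\<in>D. x \<subseteq> y \<or> y \<subseteq> x"
        using C unfolding chains_def chain_subset_def D_def by blast
      ultimately have I: "\<Inter>D \<in> Spec ar M" using DS chain_prime[of D ar M] by blast
      have "\<Inter>D \<subseteq> \<phi>" using DS \<open>D \<noteq> {}\<close> by blast
      hence "- \<Inter>D \<in> A" using I unfolding A_def by blast
      moreover have "\<forall>X\<in>C. X \<subseteq> - \<Inter>D" unfolding D_def by blast
      ultimately show ?thesis by blast
    qed
  qed
  from Zorn_Lemma2[OF this] obtain M' where M': "M' \<in> A" "\<forall>X\<in>A. M' \<subseteq> X \<longrightarrow> X = M'" by blast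
  define \<mu> where "\<mu> = - M'"
  have mu: "\<mu> \<in> Spec ar M" "\<mu> \<subseteq> \<phi>" using M'(1) unfolding A_def \<mu>_def by auto
  have "\<psi> = \<mu>" if "\<psi> \<in> Spec ar M" "\<psi> \<subseteq> \<mu>" for \<psi>
  proof -
    have "- \<psi> \<in> A" using that mu unfolding A_def by blast
    moreover have "M' \<subseteq> - \<psi>" using that unfolding \<mu>_def by blast
    ultimately have "- \<psi> = M'" using M' by blast
    then show ?thesis unfolding \<mu>_def by auto
  qed
  then show ?thesis using mu unfolding MinSpec_def by blast
qed

lemma semiprime_sep:
  assumes sp: "semiprime ar M" and xy: "(x,y) \<in> Nabla M"
    and all: "\<forall>\<mu>\<in>MinSpec ar M. (x,y) \<in> \<mu>"
  shows "x = y"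
proof (cases "{\<phi> \<in> Spec ar M. Delta M \<subseteq> \<phi>} = {}")
  case True
  then have "Nabla M = Delta M" using sp unfolding semiprime_def rad_def by simp
  then show ?thesis using xy unfolding Delta_def by auto
next
  case False
  then have eq: "\<Inter>{\<phi> \<in> Spec ar M. Delta M \<subseteq> \<phi>} = Delta M" using sp unfolding semiprime_def rad_def by (simp only: if_False)
  have "(x,y) \<in> \<phi>" if "\<phi> \<in> Spec ar M" for \<phi>
    using minprime_exists[OF that] all by blast
  then have "(x,y) \<in> Delta M" using eq by blast
  then show ?thesis unfolding Delta_def by auto
qed

theorem mainTheorem15:
  fixes ar :: "'f \<Rightarrow> nat" and A B :: "('f,'a) alg"
  assumes "is_algebra ar B"
    and "subalgebra ar A B"
    and "semiprime ar A" and "semiprime ar B"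
    and "comm_commutative ar A" and "comm_join_distributive ar A"
    and "comm_commutative ar B" and "comm_join_distributive ar B"
    and "m_extension ar A B"
    and "\<theta> \<in> Con ar A" and "\<zeta> \<in> Con ar A"
  shows "comm ar A \<theta> \<zeta> = Delta A \<longleftrightarrow>
         comm ar B (Cg ar B \<theta>) (Cg ar B \<zeta>) = Delta B"
proof -
  have AB: "carr A \<subseteq> carr B" using assms(2) unfolding subalgebra_def by blast
  have tN: "\<theta> \<subseteq> Nabla B" "\<zeta> \<subseteq> Nabla B"
    using Con_sub[OF assms(10)] Con_sub[OF assms(11)] AB unfolding Nabla_def by blast+
  have CgC: "Cg ar B \<theta> \<in> Con ar B" "Cg ar B \<zeta> \<in> Con ar B"
    using Cg_Con[OF assms(1) tN(1)] Cg_Con[OF assms(1) tN(2)] .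
  have primeD: "\<alpha> \<subseteq> \<phi> \<or> \<beta> \<subseteq> \<phi>" if "\<phi> \<in> Spec ar M" "\<alpha> \<in> Con ar M" "\<beta> \<in> Con ar M"
    "comm ar M \<alpha> \<beta> \<subseteq> \<phi>" for \<phi> \<alpha> \<beta> and M :: "('f,'a) alg"
    using that unfolding Spec_def prime_con_def by blast
  show ?thesis
  proof
    assume H: "comm ar A \<theta> \<zeta> = Delta A"
    have "comm ar B (Cg ar B \<theta>) (Cg ar B \<zeta>) \<subseteq> Delta B"
    proof
      fix p assume p: "p \<in> comm ar B (Cg ar B \<theta>) (Cg ar B \<zeta>)"
      obtain x y where pxy: "p = (x,y)" by (cases p)
      have inC: "(x,y) \<in> Cg ar B \<theta>" using comm_sub[OF CgC] p pxy by blast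
      hence xyN: "(x,y) \<in> Nabla B" using Con_sub[OF CgC(1)] unfolding Nabla_def by blast
      have "(x,y) \<in> \<mu>" if mu: "\<mu> \<in> MinSpec ar B" for \<mu>
      proof -
        have muC: "\<mu> \<in> Con ar B" using mu unfolding MinSpec_def Spec_def prime_con_def by blast
        have "\<mu> \<inter> Nabla A \<in> MinSpec ar A" using assms(9) mu unfolding m_extension_def by blast
        hence sp: "\<mu> \<inter> Nabla A \<in> Spec ar A" unfolding MinSpec_def by blast
        have "Delta A \<subseteq> \<mu> \<inter> Nabla A"
          using Con_refl[OF muC] AB unfolding Delta_def Nabla_def by auto
        hence "\<theta> \<subseteq> \<mu> \<inter> Nabla A \<or> \<zeta> \<subseteq> \<mu> \<inter> Nabla A"
          using primeD[OF sp assms(10,11)] H by simp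
        hence "Cg ar B \<theta> \<subseteq> \<mu> \<or> Cg ar B \<zeta> \<subseteq> \<mu>"
          using Cg_least[OF muC] by blast
        thus ?thesis using p pxy comm_sub[OF CgC] by blast
      qed
      hence "x = y" using semiprime_sep[OF assms(4) xyN] by blast
      thus "p \<in> Delta B" using xyN pxy unfolding Delta_def Nabla_def by auto
    qed
    thus "comm ar B (Cg ar B \<theta>) (Cg ar B \<zeta>) = Delta B" using Delta_comm by blast
  next
    assume H: "comm ar B (Cg ar B \<theta>) (Cg ar B \<zeta>) = Delta B"
    have "comm ar A \<theta> \<zeta> \<subseteq> Delta A"
    proof
      fix p assume p: "p \<in> comm ar A \<theta> \<zeta>"
      obtain x y where pxy: "p = (x,y)" by (cases p)
      have inT: "(x,y) \<in> \<theta> \<inter> \<zeta>" using comm_sub[OF assms(10,11)] p pxy by blast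
      hence xyA: "(x,y) \<in> Nabla A" using Con_sub[OF assms(10)] unfolding Nabla_def by blast
      hence xyN: "(x,y) \<in> Nabla B" using AB unfolding Nabla_def by blast
      have "(x,y) \<in> \<mu>" if mu: "\<mu> \<in> MinSpec ar B" for \<mu>
      proof -
        have sp: "\<mu> \<in> Spec ar B" using mu unfolding MinSpec_def by blast
        have muC: "\<mu> \<in> Con ar B" using sp unfolding Spec_def prime_con_def by blast
        have "Delta B \<subseteq> \<mu>" using Con_refl[OF muC] unfolding Delta_def by auto
        hence "Cg ar B \<theta> \<subseteq> \<mu> \<or> Cg ar B \<zeta> \<subseteq> \<mu>"
          using primeD[OF sp CgC] H by simp
        thus ?thesis using inT Cg_sup[of \<theta> ar B] Cg_sup[of \<zeta> ar B] by blast
      qed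
      hence "x = y" using semiprime_sep[OF assms(4) xyN] by blast
      thus "p \<in> Delta A" using xyA pxy unfolding Delta_def Nabla_def by auto
    qed
    thus "comm ar A \<theta> \<zeta> = Delta A" using Delta_comm by blast
  qed
qed

end
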